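(* Let $G,H,\widetilde H\subseteq\mathbb R^N$ be measurable sets of finite measure, with $|G|>0$, such that $|\widetilde H|=|G|$ and $|H\Delta\widetilde H|=\big||H|-|G|\big|$, and such that $G\cup\widetilde H$ has finite diameter $D'$. Then \[ 2|G\Delta H|\ \geq\ |G\Delta\widetilde H|\ \geq\ \frac{2|G|}{D'}\,\big|\mathrm{bar}(G)-\mathrm{bar}(\widetilde H)\big|\,. \]
   Context: $\Delta$ denotes symmetric difference, $|\cdot|$ Lebesgue measure, and $\mathrm{bar}(A)=\frac1{|A|}\int_A x\,dx$ the barycenter of a set $A$ of finite positive measure. The diameter of a set is in the measure-theoretic sense (supremum of distances between Lebesgue points). *)

theory Defs
  imports "HOL-Analysis.Analysis"
begin

definition symdiff :: "'a set \<Rightarrow> 'a set \<Rightarrow> 'a set" where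
  "symdiff A B = (A - B) \<union> (B - A)"

definition bar :: "'a::euclidean_space set \<Rightarrow> 'a" where
  "bar A = (1 / measure lebesgue A) *\<^sub>R (LINT x:A|lebesgue. x)"

definition lebesgue_point :: "'a::euclidean_space set \<Rightarrow> 'a \<Rightarrow> bool" where
  "lebesgue_point A x \<longleftrightarrow>
     ((\<lambda>r. measure lebesgue (A \<inter> ball x r) / measure lebesgue (ball x r)) \<longlongrightarrow> 1) (at_right 0)"

definition lp_dists :: "'a::euclidean_space set \<Rightarrow> real set" where
  "lp_dists A = {dist x y | x y. lebesgue_point A x \<and> lebesgue_point A y}"

definition ess_diam :: "'a::euclidean_space set \<Rightarrow> real" where
  "ess_diam A = Sup (lp_dists A)"

end

theory Submission
  imports Defs
begin


lemma density_aux: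
  fixes S :: "'a::euclidean_space set"
  assumes S: "S \<in> sets lebesgue" and t: "0 < t"
  shows "negligible {x\<in>S. \<forall>d>0. \<exists>r. 0<r \<and> r<d \<and>
           measure lebesgue (S \<inter> ball x r) \<le> (1-t) * measure lebesgue (ball x r)}"
    (is "negligible ?E")
  unfolding negligible_outer_le
proof (intro allI impI)
  fix e :: real assume e: "e > 0"
  let ?\<mu> = "measure lebesgue"
  obtain W where W: "open W" "S \<subseteq> W" "(W - S) \<in> lmeasurable" "emeasure lebesgue (W - S) < ennreal (e*t)"
    using sets_lebesgue_outer_open[OF S, of "e*t"] e t by auto
  have muO: "?\<mu> (W - S) \<le> e*t"
    using W(3,4) e t by (simp add: measure_def enn2real_leI less_imp_le)
  let ?K = "{(x,r). x \<in> ?E \<and> 0 < r \<and> ball x r \<subseteq> W \<and> ?\<mu> (S \<inter> ball x r) \<le> (1-t) * ?\<mu> (ball x r)}"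
  obtain C where C: "countable C" "C \<subseteq> ?K"
    and pwC: "pairwise (\<lambda>i j. disjnt (ball (fst i) (snd i)) (ball (fst j) (snd j))) C"
    and negC: "negligible (?E - (\<Union>i \<in> C. ball (fst i) (snd i)))"
  proof (rule Vitali_covering_theorem_balls [of ?E ?K fst snd])
    fix x and d :: real
    assume x: "x \<in> ?E" and d: "0 < d"
    have "x \<in> W" using x W(2) by auto
    then obtain k where k: "k > 0" "ball x k \<subseteq> W"
      using openE[OF W(1)] by metis
    have "\<forall>d>0. \<exists>r. 0<r \<and> r<d \<and> ?\<mu> (S \<inter> ball x r) \<le> (1-t) * ?\<mu> (ball x r)" using x by blast
    from this[rule_format, of "min d k"] d k obtain r where r: "0 < r" "r < min d k" "?\<mu> (S \<inter> ball x r) \<le> (1-t) * ?\<mu> (ball x r)"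
      by auto
    have "ball x r \<subseteq> W" using k r subset_ball[of r k x] by auto
    then show "\<exists>i. i \<in> ?K \<and> x \<in> ball (fst i) (snd i) \<and> snd i < d"
      using x r \<open>ball x r \<subseteq> W\<close> by (intro exI[of _ "(x,r)"]) simp
  qed
  let ?B = "\<lambda>i. ball (fst i) (snd i)"
  have bnd: "?\<mu> (\<Union>i\<in>I. ?B i) \<le> e" if I: "I \<subseteq> C" "finite I" for I
  proof -
    have Bm: "?B i \<in> lmeasurable" for i :: "'a \<times> real" by simp
    have BSm: "?B i - S \<in> lmeasurable" for i :: "'a \<times> real" by (rule fmeasurable_Diff[OF Bm S])
    have "?\<mu> (\<Union>i\<in>I. ?B i) = (\<Sum>i\<in>I. ?\<mu> (?B i))"
      by (rule measure_UNION'[OF I(2) Bm]) (rule pairwise_subset[OF pwC I(1)])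
    also have "\<dots> \<le> (\<Sum>i\<in>I. ?\<mu> (?B i - S) / t)"
    proof (rule sum_mono)
      fix i assume "i \<in> I"
      then have "i \<in> ?K" using I C by blast
      then have i: "?\<mu> (S \<inter> ?B i) \<le> (1-t) * ?\<mu> (?B i)" by (cases i) simp
      have eq: "?B i - S = ?B i - (?B i \<inter> S)" by blast
      have "?\<mu> (?B i - S) = ?\<mu> (?B i) - ?\<mu> (?B i \<inter> S)"
        unfolding eq using S Bm[of i] by (intro measure_Diff) (auto simp: fmeasurable_def)
      then have "t * ?\<mu> (?B i) \<le> ?\<mu> (?B i - S)"
        using i by (simp add: Int_commute algebra_simps)
      then show "?\<mu> (?B i) \<le> ?\<mu> (?B i - S) / t"
        using t by (simp add: field_simps mult.commute)
    qed
    also have "\<dots> = ?\<mu> (\<Union>i\<in>I. ?B i - S) / t"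
    proof -
      have "?\<mu> (\<Union>i\<in>I. ?B i - S) = (\<Sum>i\<in>I. ?\<mu> (?B i - S))"
      proof (rule measure_UNION'[OF I(2) BSm])
        show "pairwise (\<lambda>i j. disjnt (?B i - S) (?B j - S)) I"
          by (rule pairwise_mono[OF pwC _ I(1)]) (auto simp: disjnt_def)
      qed
      then show ?thesis by (simp add: sum_divide_distrib)
    qed
    also have "\<dots> \<le> ?\<mu> (W - S) / t"
    proof -
      have "(\<Union>i\<in>I. ?B i - S) \<subseteq> W - S"
      proof
        fix y assume "y \<in> (\<Union>i\<in>I. ?B i - S)"
        then obtain i where "i \<in> I" "y \<in> ?B i" "y \<notin> S" by blast
        moreover have "i \<in> ?K" using \<open>i \<in> I\<close> I C by blast
        ultimately show "y \<in> W - S" by (cases i) auto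
      qed
      moreover have "(\<Union>i\<in>I. ?B i - S) \<in> sets lebesgue"
        using I(2) BSm by (intro sets.finite_UN) (auto simp: fmeasurable_def)
      ultimately have "?\<mu> (\<Union>i\<in>I. ?B i - S) \<le> ?\<mu> (W - S)"
        using W(3) by (intro measure_mono_fmeasurable) auto
      then show ?thesis using t by (simp add: divide_right_mono)
    qed
    also have "\<dots> \<le> e" using muO t by (simp add: field_simps)
    finally show ?thesis .
  qed
  have U1: "(\<Union>i\<in>C. ?B i) \<in> lmeasurable" "?\<mu> (\<Union>i\<in>C. ?B i) \<le> e"
    using fmeasurable_UN_bound[OF C(1) _ bnd] measure_UN_bound[OF C(1) _ bnd] by auto
  let ?T = "(?E - (\<Union>i \<in> C. ?B i)) \<union> (\<Union>i\<in>C. ?B i)"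
  have "?\<mu> ?T = ?\<mu> (\<Union>i\<in>C. ?B i)"
    by (rule measure_negligible_symdiff[OF U1(1)]) (rule negligible_subset[OF negC], blast)
  moreover have "?T \<in> lmeasurable"
    by (rule fmeasurable.Un[OF negligible_imp_measurable[OF negC] U1(1)])
  ultimately show "\<exists>T. ?E \<subseteq> T \<and> T \<in> lmeasurable \<and> ?\<mu> T \<le> e"
    using U1 by (intro exI[of _ ?T]) auto
qed

lemma density_thm:
  fixes S :: "'a::euclidean_space set"
  assumes S: "S \<in> sets lebesgue"
  shows "negligible {x\<in>S. \<not> lebesgue_point S x}"
proof -
  let ?\<mu> = "measure lebesgue"
  define E where "E n = {x\<in>S. \<forall>d>0. \<exists>r. 0<r \<and> r<d \<and>
           ?\<mu> (S \<inter> ball x r) \<le> (1 - 1 / real (Suc n)) * ?\<mu> (ball x r)}" for n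
  have negE: "negligible (\<Union>n. E n)"
    unfolding E_def by (intro negligible_Union_nat density_aux[OF S]) simp
  have "{x\<in>S. \<not> lebesgue_point S x} \<subseteq> (\<Union>n. E n)"
  proof
    fix x assume x: "x \<in> {x\<in>S. \<not> lebesgue_point S x}"
    show "x \<in> (\<Union>n. E n)"
    proof (rule ccontr)
      assume "x \<notin> (\<Union>n. E n)"
      have nE: "\<forall>n. \<exists>d>0. \<forall>r. 0<r \<and> r<d \<longrightarrow> ?\<mu> (S \<inter> ball x r) > (1 - 1 / real (Suc n)) * ?\<mu> (ball x r)"
      proof
        fix n
        have "x \<notin> E n" using \<open>x \<notin> (\<Union>n. E n)\<close> by blast
        then obtain d where "d>0" "\<forall>r. \<not>(0<r \<and> r<d \<and> ?\<mu> (S \<inter> ball x r) \<le> (1 - 1 / real (Suc n)) * ?\<mu> (ball x r))"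
          using x unfolding E_def by blast
        then show "\<exists>d>0. \<forall>r. 0<r \<and> r<d \<longrightarrow> ?\<mu> (S \<inter> ball x r) > (1 - 1 / real (Suc n)) * ?\<mu> (ball x r)"
          by (intro exI[of _ d]) (auto simp: not_le simp del: of_nat_Suc)
      qed
      have "((\<lambda>r. ?\<mu> (S \<inter> ball x r) / ?\<mu> (ball x r)) \<longlongrightarrow> 1) (at_right 0)"
      proof (rule tendstoI)
        fix e :: real assume e: "e > 0"
        obtain n where n: "1 / real (Suc n) < e"
          using reals_Archimedean[OF e] by (auto simp: divide_inverse)
        obtain d where d: "d > 0" "\<And>r. 0<r \<Longrightarrow> r<d \<Longrightarrow> ?\<mu> (S \<inter> ball x r) > (1 - 1 / real (Suc n)) * ?\<mu> (ball x r)"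
          using nE by blast
        show "eventually (\<lambda>r. dist (?\<mu> (S \<inter> ball x r) / ?\<mu> (ball x r)) 1 < e) (at_right 0)"
          unfolding eventually_at_right_field
        proof (intro exI[of _ d] conjI allI impI)
          fix r :: real assume r: "0 < r" "r < d"
          have pos: "?\<mu> (ball x r) > 0" using r by (simp add: content_ball_pos)
          have le: "?\<mu> (S \<inter> ball x r) \<le> ?\<mu> (ball x r)"
            using S by (intro measure_mono_fmeasurable) auto
          have gt: "?\<mu> (S \<inter> ball x r) > (1 - 1 / real (Suc n)) * ?\<mu> (ball x r)"
            using d r by auto
          have "?\<mu> (S \<inter> ball x r) / ?\<mu> (ball x r) \<le> 1" using le pos by simp
          moreover have "?\<mu> (S \<inter> ball x r) / ?\<mu> (ball x r) > 1 - 1 / real (Suc n)"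
            using gt pos by (simp add: field_simps)
          ultimately show "dist (?\<mu> (S \<inter> ball x r) / ?\<mu> (ball x r)) 1 < e"
            using n by (simp add: dist_real_def abs_if)
        qed (use d in auto)
      qed
      then show False using x unfolding lebesgue_point_def by auto
    qed
  qed
  then show ?thesis using negligible_subset[OF negE] by blast
qed



lemma set_integrable_bounded_id:
  fixes X :: "'a::euclidean_space set"
  assumes X[measurable]: "X \<in> sets lebesgue" and fin: "emeasure lebesgue X < \<infinity>"
    and N: "negligible N" and bnd: "\<And>x. x \<in> X \<Longrightarrow> x \<notin> N \<Longrightarrow> norm x \<le> K"
  shows "set_integrable lebesgue X (\<lambda>x. x)"
  unfolding set_integrable_def
proof (rule integrableI_bounded_set[where A=X and B=K])
  show "(\<lambda>x. indicator X x *\<^sub>R x) \<in> borel_measurable lebesgue" using X by (intro borel_measurable_scaleR borel_measurable_indicator) (auto simp: id_def[symmetric])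
  have "AE x in lebesgue. x \<notin> N" using N by (intro AE_not_in) (simp add: negligible_iff_null_sets)
  then show "AE x in lebesgue. x \<in> X \<longrightarrow> norm (indicator X x *\<^sub>R x) \<le> K"
    by eventually_elim (auto simp: bnd)
qed (use fin in auto)

lemma set_integral_inner_right':
  fixes f :: "_ \<Rightarrow> 'b::euclidean_space"
  assumes "set_integrable M A f"
  shows "(LINT x:A|M. c \<bullet> f x) = c \<bullet> (LINT x:A|M. f x)"
    and "set_integrable M A (\<lambda>x. c \<bullet> f x)"
proof -
  have eq: "(\<lambda>x. indicator A x *\<^sub>R (c \<bullet> f x)) = (\<lambda>x. c \<bullet> (indicator A x *\<^sub>R f x))"
    by (simp add: inner_scaleR_right)
  have int: "integrable M (\<lambda>x. indicator A x *\<^sub>R f x)" using assms by (simp add: set_integrable_def)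
  show "(LINT x:A|M. c \<bullet> f x) = c \<bullet> (LINT x:A|M. f x)"
    unfolding set_lebesgue_integral_def eq by (rule integral_inner_right) (rule int)
  show "set_integrable M A (\<lambda>x. c \<bullet> f x)"
    unfolding set_integrable_def eq by (rule integrable_inner_right) (rule int)
qed



lemma part1:
  fixes G H Ht :: "'a::euclidean_space set"
  assumes G: "G \<in> lmeasurable" and H: "H \<in> lmeasurable" and Ht: "Ht \<in> lmeasurable"
    and eq: "measure lebesgue (symdiff H Ht) = \<bar>measure lebesgue H - measure lebesgue G\<bar>"
  shows "2 * measure lebesgue (symdiff G H) \<ge> measure lebesgue (symdiff G Ht)"
proof -
  let ?\<mu> = "measure lebesgue"
  have m: "symdiff X Y \<in> lmeasurable" if "X \<in> lmeasurable" "Y \<in> lmeasurable" for X Y :: "'a set"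
    using that unfolding symdiff_def by (intro fmeasurable.Un fmeasurable_Diff) (auto)
  have "?\<mu> (symdiff G Ht) \<le> ?\<mu> (symdiff G H \<union> symdiff H Ht)"
    by (rule measure_mono_fmeasurable[OF _ fmeasurableD[OF m[OF G Ht]] fmeasurable.Un[OF m[OF G H] m[OF H Ht]]]) (auto simp: symdiff_def)
  also have "\<dots> \<le> ?\<mu> (symdiff G H) + ?\<mu> (symdiff H Ht)"
    using m[OF G H] m[OF H Ht] by (intro measure_Un_le) auto
  also have "?\<mu> H \<le> ?\<mu> G + ?\<mu> (symdiff G H)"
  proof -
    have "?\<mu> H \<le> ?\<mu> (G \<union> symdiff G H)"
      by (rule measure_mono_fmeasurable[OF _ fmeasurableD[OF H] fmeasurable.Un[OF G m[OF G H]]]) (auto simp: symdiff_def)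
    also have "\<dots> \<le> ?\<mu> G + ?\<mu> (symdiff G H)"
      using m[OF G H] G by (intro measure_Un_le) auto
    finally show ?thesis .
  qed
  moreover have "?\<mu> G \<le> ?\<mu> H + ?\<mu> (symdiff G H)"
  proof -
    have "?\<mu> G \<le> ?\<mu> (H \<union> symdiff G H)"
      by (rule measure_mono_fmeasurable[OF _ fmeasurableD[OF G] fmeasurable.Un[OF H m[OF G H]]]) (auto simp: symdiff_def)
    also have "\<dots> \<le> ?\<mu> H + ?\<mu> (symdiff G H)"
      using m[OF G H] H by (intro measure_Un_le) auto
    finally show ?thesis .
  qed
  ultimately show ?thesis using eq by linarith
qed

lemma set_integral_null_zero:
  fixes A :: "'a::euclidean_space set"
  assumes "A \<in> lmeasurable" "measure lebesgue A = 0"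
  shows "(LINT x:A|lebesgue. x) = 0"
proof -
  have "A \<in> null_sets lebesgue" using assms emeasure_eq_ennreal_measure[of lebesgue A]
    by (auto simp: fmeasurable_def intro!: null_setsI)
  then have "AE x in lebesgue. x \<notin> A" by (rule AE_not_in)
  then have "AE x in lebesgue. indicator A x *\<^sub>R x = (0::'a)" by eventually_elim simp
  then show ?thesis unfolding set_lebesgue_integral_def by (rule integral_eq_zero_AE)
qed

lemma key_bound:
  fixes A B N :: "'a::euclidean_space set" and D :: real
  assumes A: "A \<in> lmeasurable" and B: "B \<in> lmeasurable"
    and mAB: "measure lebesgue A = measure lebesgue B"
    and N: "negligible N"
    and dist: "\<And>x y. x \<in> A \<Longrightarrow> x \<notin> N \<Longrightarrow> y \<in> B \<Longrightarrow> y \<notin> N \<Longrightarrow> dist x y \<le> D"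
    and D: "D \<ge> 0"
    and iA: "set_integrable lebesgue A (\<lambda>x. x)" and iB: "set_integrable lebesgue B (\<lambda>x. x)"
  shows "norm ((LINT x:A|lebesgue. x) - (LINT x:B|lebesgue. x)) \<le> measure lebesgue A * D"
proof (cases "(LINT x:A|lebesgue. x) - (LINT x:B|lebesgue. x) = 0")
  case True
  then show ?thesis using D by simp
next
  case False
  let ?\<mu> = "measure lebesgue"
  define v where "v = (LINT x:A|lebesgue. x) - (LINT x:B|lebesgue. x)"
  have v0: "v \<noteq> 0" using False v_def by simp
  have mpos: "?\<mu> A \<noteq> 0"
  proof
    assume "?\<mu> A = 0"
    then have "(LINT x:A|lebesgue. x) = 0" "(LINT x:B|lebesgue. x) = 0"
      using set_integral_null_zero[OF A] set_integral_null_zero[OF B] mAB by auto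
    then show False using v0 v_def by simp
  qed
  have nonemp: "X - N \<noteq> {}" if "X \<in> lmeasurable" "?\<mu> X \<noteq> 0" for X
  proof
    assume "X - N = {}"
    then have "X \<subseteq> N" by blast
    then have "negligible X" using N negligible_subset by blast
    then show False using that negligible_imp_measure0 by blast
  qed
  obtain x0 where x0: "x0 \<in> A" "x0 \<notin> N" using nonemp[OF A mpos] by blast
  have BN: "B - N \<noteq> {}" using nonemp[OF B] mpos mAB by auto
  define u where "u = v /\<^sub>R norm v"
  have nu: "norm u = 1" using v0 u_def by simp
  have uv: "u \<bullet> v = norm v" using v0 u_def by (simp add: power2_norm_eq_inner[symmetric] power2_eq_square)
  have csu: "u \<bullet> x - u \<bullet> y \<le> D" if "x \<in> A" "x \<notin> N" "y \<in> B" "y \<notin> N" for x y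
  proof -
    have "u \<bullet> x - u \<bullet> y = u \<bullet> (x - y)" by (simp add: inner_diff_right)
    also have "\<dots> \<le> norm u * norm (x - y)" by (rule norm_cauchy_schwarz)
    also have "\<dots> = dist x y" using nu by (simp add: dist_norm)
    also have "\<dots> \<le> D" using dist that by blast
    finally show ?thesis .
  qed
  define \<alpha> where "\<alpha> = Inf ((\<lambda>y. u \<bullet> y) ` (B - N))"
  have bdd: "bdd_below ((\<lambda>y. u \<bullet> y) ` (B - N))"
    unfolding bdd_below_def using csu[OF x0] by (intro exI[of _ "u \<bullet> x0 - D"]) force
  have al: "\<alpha> \<le> u \<bullet> y" if "y \<in> B" "y \<notin> N" for y
    unfolding \<alpha>_def using that bdd by (intro cInf_lower) auto
  have au: "u \<bullet> x \<le> \<alpha> + D" if "x \<in> A" "x \<notin> N" for x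
  proof -
    have "u \<bullet> x - D \<le> \<alpha>"
      unfolding \<alpha>_def using BN csu[OF that] by (intro cInf_greatest) force+
    then show ?thesis by simp
  qed
  have AEN: "AE x in lebesgue. x \<notin> N" using N by (intro AE_not_in) (simp add: negligible_iff_null_sets)
  have ic: "set_integrable lebesgue X (\<lambda>_. c::real)" if "X \<in> lmeasurable" for X c
    unfolding set_integrable_def using that by (intro integrable_indicator) (auto simp: fmeasurable_def)
  have intA: "(LINT x:A|lebesgue. u \<bullet> x) \<le> (LINT x:A|lebesgue. \<alpha> + D)"
    by (rule set_integral_mono_AE[OF set_integral_inner_right'(2)[OF iA] ic[OF A]])
       (use AEN in \<open>eventually_elim, use au in auto\<close>)
  have intB: "(LINT x:B|lebesgue. \<alpha>) \<le> (LINT x:B|lebesgue. u \<bullet> x)"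
    by (rule set_integral_mono_AE[OF ic[OF B] set_integral_inner_right'(2)[OF iB]])
       (use AEN in \<open>eventually_elim, use al in auto\<close>)
  have cA: "(LINT x:A|lebesgue. \<alpha> + D) = ?\<mu> A * (\<alpha> + D)"
    using A by (subst set_integral_const) (auto simp: fmeasurable_def)
  have cB: "(LINT x:B|lebesgue. \<alpha>) = ?\<mu> B * \<alpha>"
    using B by (subst set_integral_const) (auto simp: fmeasurable_def)
  have "norm v = u \<bullet> v" using uv by simp
  also have "\<dots> = (LINT x:A|lebesgue. u \<bullet> x) - (LINT x:B|lebesgue. u \<bullet> x)"
    unfolding v_def by (simp add: inner_diff_right set_integral_inner_right'(1)[OF iA] set_integral_inner_right'(1)[OF iB])
  also have "\<dots> \<le> ?\<mu> A * (\<alpha> + D) - ?\<mu> B * \<alpha>" using intA intB cA cB by linarith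
  also have "\<dots> = ?\<mu> A * D" using mAB by (simp add: algebra_simps)
  finally show ?thesis unfolding v_def .
qed

theorem lemma2p4:
  fixes G H Ht :: "'a::euclidean_space set" and D' :: real
  assumes "G \<in> sets lebesgue" "H \<in> sets lebesgue" "Ht \<in> sets lebesgue"
    and "emeasure lebesgue G < \<infinity>" "emeasure lebesgue H < \<infinity>" "emeasure lebesgue Ht < \<infinity>"
    and "measure lebesgue G > 0"
    and "measure lebesgue Ht = measure lebesgue G"
    and "measure lebesgue (symdiff H Ht) = \<bar>measure lebesgue H - measure lebesgue G\<bar>"
    and "bdd_above (lp_dists (G \<union> Ht))"
    and "D' = ess_diam (G \<union> Ht)"
  shows "2 * measure lebesgue (symdiff G H) \<ge> measure lebesgue (symdiff G Ht) \<and>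
         measure lebesgue (symdiff G Ht) \<ge> 2 * measure lebesgue G / D' * norm (bar G - bar Ht)"
proof
  let ?\<mu> = "measure lebesgue"
  have G: "G \<in> lmeasurable" and H: "H \<in> lmeasurable" and Ht: "Ht \<in> lmeasurable"
    using assms(1-6) by (auto simp: fmeasurable_def)
  show "2 * ?\<mu> (symdiff G H) \<ge> ?\<mu> (symdiff G Ht)"
    by (rule part1[OF G H Ht assms(9)])
  define S where "S = G \<union> Ht"
  define N where "N = {x\<in>S. \<not> lebesgue_point S x}"
  have S: "S \<in> sets lebesgue" using assms(1,3) S_def by auto
  have N: "negligible N" unfolding N_def by (rule density_thm[OF S])
  have dle: "dist x y \<le> D'" if "x \<in> S" "x \<notin> N" "y \<in> S" "y \<notin> N" for x y
  proof -
    have "dist x y \<in> lp_dists S" using that unfolding lp_dists_def N_def by blast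
    then show ?thesis unfolding assms(11) ess_diam_def S_def[symmetric]
      using assms(10) S_def by (intro cSup_upper) auto
  qed
  show "?\<mu> (symdiff G Ht) \<ge> 2 * ?\<mu> G / D' * norm (bar G - bar Ht)"
  proof (cases "D' \<le> 0")
    case True
    have "2 * ?\<mu> G / D' \<le> 0" using True assms(7) by (intro divide_nonneg_nonpos) auto
    then have "2 * ?\<mu> G / D' * norm (bar G - bar Ht) \<le> 0"
      by (intro mult_nonpos_nonneg) auto
    also have "0 \<le> ?\<mu> (symdiff G Ht)" by simp
    finally show ?thesis .
  next
    case False
    then have Dpos: "D' > 0" by simp
    define A where "A = G - Ht"
    define B where "B = Ht - G"
    define I where "I = G \<inter> Ht"
    have A: "A \<in> lmeasurable" unfolding A_def using G Ht by (intro fmeasurable_Diff) auto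
    have B: "B \<in> lmeasurable" unfolding B_def using G Ht by (intro fmeasurable_Diff) auto
    have I: "I \<in> lmeasurable" unfolding I_def using G Ht by (intro fmeasurable.Int) auto
    have mG: "?\<mu> G = ?\<mu> A + ?\<mu> I"
    proof -
      have "G = A \<union> I" unfolding A_def I_def by blast
      then show ?thesis using A I by (subst measure_Union[symmetric]) (auto simp: fmeasurable_def A_def I_def)
    qed
    have mHt: "?\<mu> Ht = ?\<mu> B + ?\<mu> I"
    proof -
      have "Ht = B \<union> I" unfolding B_def I_def by blast
      then show ?thesis using B I by (subst measure_Union[symmetric]) (auto simp: fmeasurable_def B_def I_def)
    qed
    have mAB: "?\<mu> A = ?\<mu> B" using mG mHt assms(8) by linarith
    have msd: "?\<mu> (symdiff G Ht) = ?\<mu> A + ?\<mu> B"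
      unfolding symdiff_def A_def[symmetric] B_def[symmetric]
      using A B by (subst measure_Union) (auto simp: fmeasurable_def A_def B_def)
    have "G - N \<noteq> {}"
    proof
      assume "G - N = {}"
      then have "negligible G" using N negligible_subset by blast
      then show False using assms(7) negligible_imp_measure0[of G] by simp
    qed
    then obtain x0 where x0: "x0 \<in> G" "x0 \<notin> N" by blast
    have bnd: "norm x \<le> norm x0 + D'" if "x \<in> S" "x \<notin> N" for x
    proof -
      have "norm x \<le> norm x0 + norm (x - x0)" using norm_triangle_sub[of x x0] by simp
      also have "norm (x - x0) = dist x x0" by (simp add: dist_norm)
      also have "\<dots> \<le> D'" using dle[OF that] x0 S_def by auto
      finally show ?thesis by simp
    qed
    have iX: "set_integrable lebesgue X (\<lambda>x. x)" if "X \<in> lmeasurable" "X \<subseteq> S" for X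
    proof (rule set_integrable_bounded_id[OF _ _ N, of X "norm x0 + D'"])
      show "X \<in> sets lebesgue" "emeasure lebesgue X < \<infinity>" using that(1) by (auto simp: fmeasurable_def)
      fix x assume "x \<in> X" "x \<notin> N"
      then show "norm x \<le> norm x0 + D'" using bnd that(2) by blast
    qed
    have iA: "set_integrable lebesgue A (\<lambda>x. x)" by (rule iX[OF A]) (auto simp: A_def S_def)
    have iB: "set_integrable lebesgue B (\<lambda>x. x)" by (rule iX[OF B]) (auto simp: B_def S_def)
    have iI: "set_integrable lebesgue I (\<lambda>x. x)" by (rule iX[OF I]) (auto simp: I_def S_def)
    have LG: "(LINT x:G|lebesgue. x) = (LINT x:A|lebesgue. x) + (LINT x:I|lebesgue. x)"
    proof -
      have "A \<union> I = G" unfolding A_def I_def by blast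
      moreover have "A \<inter> I = {}" unfolding A_def I_def by blast
      ultimately show ?thesis using set_integral_Un[OF _ iA iI] by simp
    qed
    have LHt: "(LINT x:Ht|lebesgue. x) = (LINT x:B|lebesgue. x) + (LINT x:I|lebesgue. x)"
    proof -
      have "B \<union> I = Ht" unfolding B_def I_def by blast
      moreover have "B \<inter> I = {}" unfolding B_def I_def by blast
      ultimately show ?thesis using set_integral_Un[OF _ iB iI] by simp
    qed
    define v where "v = (LINT x:A|lebesgue. x) - (LINT x:B|lebesgue. x)"
    have "bar G - bar Ht = (1 / ?\<mu> G) *\<^sub>R v"
      unfolding bar_def assms(8) v_def LG LHt by (simp add: scaleR_diff_right[symmetric])
    then have nb: "norm (bar G - bar Ht) = norm v / ?\<mu> G" using assms(7) by simp
    have kb: "norm v \<le> ?\<mu> A * D'"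
      unfolding v_def
      by (rule key_bound[OF A B mAB N _ _ iA iB]) (use dle Dpos in \<open>auto simp: A_def B_def S_def\<close>)
    have "2 * ?\<mu> G / D' * norm (bar G - bar Ht) \<le> 2 * ?\<mu> G / D' * (?\<mu> A * D' / ?\<mu> G)"
      unfolding nb using kb assms(7) Dpos
      by (intro mult_left_mono divide_right_mono) auto
    also have "\<dots> = 2 * ?\<mu> A" using assms(7) Dpos by (simp add: field_simps)
    also have "\<dots> = ?\<mu> (symdiff G Ht)" using msd mAB by simp
    finally show ?thesis .
  qed
qed

end
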